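(* Let $(X,d)$ be a compact metric space, $\mathbb{F}=\{f_n:n\in\mathbb{N}\}$ a sequence of continuous surjective self-maps of $X$, and $k\in\mathbb{N}$. If $(X,\mathbb{F})$ is syndetically (resp. cofinitely) sensitive then $(X,\mathbb{F}_k)$ is syndetically (resp. cofinitely) sensitive. If the family $\mathbb{F}$ is feeble open, then $(X,\mathbb{F}_k)$ syndetically (resp. cofinitely) sensitive implies $(X,\mathbb{F})$ syndetically (resp. cofinitely) sensitive.
   Context: Write $\omega_n=f_n\circ\cdots\circ f_1$ and, for $n>k$, $\omega^k_n=f_n\circ\cdots\circ f_{k+1}$; $\mathbb{F}_k=\{f_n:n\ge k+1\}$ is the truncated family. $(X,\mathbb{F})$ is syndetically sensitive if there is $\delta>0$ such that for every non-empty open $U$ the set $\{n\in\mathbb{N}:\mathrm{diam}(\omega_n(U))>\delta\}$ is syndetic (has bounded gaps); it is cofinitely sensitive if there is $\delta>0$ such that for every non-empty open $U$ there is $K$ with $\mathrm{diam}(\omega_n(U))>\delta$ for all $n\ge K$. The same notions for $(X,\mathbb{F}_k)$ use $\omega^k_n$ ($n>k$). $\mathbb{F}$ is feeble open if for every non-empty open $U$ and every $f\in\mathbb{F}$, $f(U)$ has non-empty interior. *)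

theory Defs
  imports "HOL-Analysis.Analysis"
begin

text \<open>The family is indexed from 1: f 1, f 2, ... (the value f 0 is never used).
  omega f k n = f n o ... o f (k+1) for n > k, and the identity for n \<le> k.
  omega f 0 n is the full composition f n o ... o f 1.\<close>
fun omega :: "(nat \<Rightarrow> 'a \<Rightarrow> 'a) \<Rightarrow> nat \<Rightarrow> nat \<Rightarrow> 'a \<Rightarrow> 'a" where
  "omega f k 0 = id"
| "omega f k (Suc n) = (if Suc n \<le> k then id else f (Suc n) \<circ> omega f k n)"

definition syndetic :: "nat set \<Rightarrow> bool" where
  "syndetic S \<longleftrightarrow> (\<exists>M. \<forall>n. \<exists>m\<in>S. n \<le> m \<and> m \<le> n + M)"

definition synd_sensitive :: "'a::metric_space set \<Rightarrow> (nat \<Rightarrow> 'a \<Rightarrow> 'a) \<Rightarrow> nat \<Rightarrow> bool" where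
  "synd_sensitive X f k \<longleftrightarrow> (\<exists>\<delta>>0. \<forall>U. openin (top_of_set X) U \<and> U \<noteq> {} \<longrightarrow>
      syndetic {n. k < n \<and> diameter (omega f k n ` U) > \<delta>})"

definition cofin_sensitive :: "'a::metric_space set \<Rightarrow> (nat \<Rightarrow> 'a \<Rightarrow> 'a) \<Rightarrow> nat \<Rightarrow> bool" where
  "cofin_sensitive X f k \<longleftrightarrow> (\<exists>\<delta>>0. \<forall>U. openin (top_of_set X) U \<and> U \<noteq> {} \<longrightarrow>
      (\<exists>K. \<forall>n. K \<le> n \<and> k < n \<longrightarrow> diameter (omega f k n ` U) > \<delta>))"

definition feeble_open :: "'a::metric_space set \<Rightarrow> (nat \<Rightarrow> 'a \<Rightarrow> 'a) \<Rightarrow> bool" where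
  "feeble_open X f \<longleftrightarrow> (\<forall>U n. openin (top_of_set X) U \<and> U \<noteq> {} \<and> 1 \<le> n \<longrightarrow>
      (top_of_set X) interior_of (f n ` U) \<noteq> {})"

end

theory Submission
  imports Defs
begin

lemma omega_img:
  assumes "\<And>n. 1 \<le> n \<Longrightarrow> f n ` X = X"
  shows "omega f k n ` X \<subseteq> X"
proof (induction n)
  case 0 then show ?case by simp
next
  case (Suc n)
  have e: "f (Suc n) ` X = X" using assms[of "Suc n"] by simp
  have "f (Suc n) ` (omega f k n ` X) \<subseteq> f (Suc n) ` X"
    using Suc by (rule image_mono)
  then have "f (Suc n) ` (omega f k n ` X) \<subseteq> X" using e by simp
  then show ?case by (simp add: image_comp)
qed

lemma omega_comp:
  "k \<le> n \<Longrightarrow> omega f 0 n = omega f k n \<circ> omega f 0 k"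
proof (induction n)
  case 0 then show ?case by simp
next
  case (Suc n)
  show ?case
  proof (cases "Suc n \<le> k")
    case True
    then have "k = Suc n" using Suc.prems by simp
    then show ?thesis by simp
  next
    case False
    then have "k \<le> n" by simp
    then show ?thesis using Suc.IH False by (simp add: comp_assoc)
  qed
qed

lemma omega_cont:
  assumes "\<And>n. 1 \<le> n \<Longrightarrow> continuous_on X (f n)"
    and "\<And>n. 1 \<le> n \<Longrightarrow> f n ` X = X"
  shows "continuous_on X (omega f 0 n)"
proof (induction n)
  case 0 then show ?case by (simp add: continuous_on_id)
next
  case (Suc n)
  have c: "continuous_on X (f (Suc n))" using assms(1)[of "Suc n"] by simp
  have "continuous_on (omega f 0 n ` X) (f (Suc n))"
    using continuous_on_subset[OF c omega_img[OF assms(2), where k=0 and n=n]] .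
  then have "continuous_on X (f (Suc n) \<circ> omega f 0 n)"
    by (rule continuous_on_compose[OF Suc.IH])
  then show ?case by simp
qed

lemma omega_surj:
  assumes "\<And>n. 1 \<le> n \<Longrightarrow> f n ` X = X"
  shows "omega f 0 n ` X = X"
proof (induction n)
  case 0 then show ?case by simp
next
  case (Suc n)
  have e: "f (Suc n) ` X = X" using assms[of "Suc n"] by simp
  have "omega f 0 (Suc n) ` X = f (Suc n) ` (omega f 0 n ` X)" by (simp add: image_comp)
  then show ?case using Suc e by simp
qed

lemma omega_int:
  assumes "feeble_open X f"
  shows "openin (top_of_set X) U \<Longrightarrow> U \<noteq> {} \<Longrightarrow>
    \<exists>W. openin (top_of_set X) W \<and> W \<noteq> {} \<and> W \<subseteq> omega f 0 j ` U"
proof (induction j)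
  case 0 then show ?case by auto
next
  case (Suc j)
  then obtain W where W: "openin (top_of_set X) W" "W \<noteq> {}" "W \<subseteq> omega f 0 j ` U" by blast
  let ?W = "(top_of_set X) interior_of (f (Suc j) ` W)"
  have "?W \<noteq> {}" using assms W unfolding feeble_open_def by auto
  moreover have "openin (top_of_set X) ?W" by simp
  moreover have "?W \<subseteq> f (Suc j) ` W" by (rule interior_of_subset)
  then have "?W \<subseteq> f (Suc j) ` (omega f 0 j ` U)" using W(3) by blast
  then have "?W \<subseteq> omega f 0 (Suc j) ` U" by (simp add: image_comp)
  ultimately show ?case by blast
qed

lemma synd_shift:
  assumes "syndetic S" shows "syndetic {n\<in>S. k < n}"
proof -
  obtain M where M: "\<forall>n. \<exists>m\<in>S. n \<le> m \<and> m \<le> n + M" using assms syndetic_def by auto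
  show ?thesis unfolding syndetic_def
  proof (intro exI allI)
    fix n
    obtain m where "m \<in> S" "n + k + 1 \<le> m" "m \<le> n + k + 1 + M" using M by blast
    then show "\<exists>m\<in>{n \<in> S. k < n}. n \<le> m \<and> m \<le> n + (k + 1 + M)" by auto
  qed
qed

lemma synd_mono: "syndetic S \<Longrightarrow> S \<subseteq> T \<Longrightarrow> syndetic T"
  unfolding syndetic_def by blast

theorem mainTheorem7:
  fixes X :: "'a::metric_space set" and f :: "nat \<Rightarrow> 'a \<Rightarrow> 'a" and k :: nat
  assumes "compact X"
    and "\<And>n. 1 \<le> n \<Longrightarrow> continuous_on X (f n)"
    and "\<And>n. 1 \<le> n \<Longrightarrow> f n ` X = X"
  shows "(synd_sensitive X f 0 \<longrightarrow> synd_sensitive X f k)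
       \<and> (cofin_sensitive X f 0 \<longrightarrow> cofin_sensitive X f k)
       \<and> (feeble_open X f \<longrightarrow>
            (synd_sensitive X f k \<longrightarrow> synd_sensitive X f 0)
          \<and> (cofin_sensitive X f k \<longrightarrow> cofin_sensitive X f 0))"
proof -
  have bX: "bounded X" using assms(1) compact_imp_bounded by blast
  have diam_le: "diameter (omega f j n ` A) \<le> diameter (omega f j n ` B)" if "A \<subseteq> B" "B \<subseteq> X" for j n A B
  proof -
    have "omega f j n ` B \<subseteq> X" using omega_img[where f=f and X=X and k=j and n=n, OF assms(3)] that by blast
    then have "bounded (omega f j n ` B)" using bX bounded_subset by blast
    then show ?thesis by (rule diameter_subset[rotated]) (use that in blast)
  qed
  define g where "g = omega f 0 k"
  have gc: "continuous_on X g" unfolding g_def by (rule omega_cont[OF assms(2,3)])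
  have gs: "g ` X = X" unfolding g_def by (rule omega_surj[OF assms(3)])
  have pull: "\<exists>V. openin (top_of_set X) V \<and> V \<noteq> {} \<and>
      (\<forall>n. k < n \<longrightarrow> diameter (omega f 0 n ` V) \<le> diameter (omega f k n ` U))"
    if U: "openin (top_of_set X) U" "U \<noteq> {}" for U
  proof -
    define V where "V = X \<inter> g -` U"
    have gX: "g \<in> X \<rightarrow> X" using gs by (simp add: image_subset_iff_funcset[symmetric])
    have "openin (top_of_set X) V" unfolding V_def by (rule continuous_openin_preimage[OF gc gX U(1)])
    moreover have "V \<noteq> {}"
    proof -
      obtain u where u: "u \<in> U" using U(2) by blast
      moreover have "U \<subseteq> X" using openin_subset[OF U(1)] by simp
      ultimately have "u \<in> g ` X" unfolding gs by blast
      then obtain x where "x \<in> X" "g x = u" by blast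
      then have "x \<in> V" unfolding V_def using u by simp
      then show ?thesis by blast
    qed
    moreover have "diameter (omega f 0 n ` V) \<le> diameter (omega f k n ` U)" if "k < n" for n
    proof -
      have e: "omega f 0 n = omega f k n \<circ> g" unfolding g_def
        by (rule omega_comp) (use that in linarith)
      have "omega f 0 n ` V = omega f k n ` (g ` V)" unfolding e by (rule image_comp[symmetric])
      moreover have "g ` V \<subseteq> U" unfolding V_def by auto
      moreover have "U \<subseteq> X" using openin_subset[OF U(1)] by simp
      ultimately show ?thesis using diam_le[of "g ` V" U k n] by simp
    qed
    ultimately show ?thesis by blast
  qed
  have push: "\<exists>W. openin (top_of_set X) W \<and> W \<noteq> {} \<and>
      (\<forall>n. k < n \<longrightarrow> diameter (omega f k n ` W) \<le> diameter (omega f 0 n ` U))"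
    if fo: "feeble_open X f" and U: "openin (top_of_set X) U" "U \<noteq> {}" for U
  proof -
    obtain W where W: "openin (top_of_set X) W" "W \<noteq> {}" "W \<subseteq> g ` U"
      using omega_int[OF fo U, of k] unfolding g_def by blast
    have "diameter (omega f k n ` W) \<le> diameter (omega f 0 n ` U)" if "k < n" for n
    proof -
      have e: "omega f 0 n = omega f k n \<circ> g" unfolding g_def
        by (rule omega_comp) (use that in linarith)
      have "omega f 0 n ` U = omega f k n ` (g ` U)" unfolding e by (rule image_comp[symmetric])
      moreover have "g ` U \<subseteq> g ` X" using openin_subset[OF U(1)] by (intro image_mono) simp
      then have "g ` U \<subseteq> X" unfolding gs .
      ultimately show ?thesis using diam_le[of W "g ` U" k n] W(3) by simp
    qed
    then show ?thesis using W by blast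
  qed
  have A: "synd_sensitive X f k" if h: "synd_sensitive X f 0"
  proof -
    obtain d where d: "d > 0" "\<And>U. openin (top_of_set X) U \<and> U \<noteq> {} \<Longrightarrow>
      syndetic {n. 0 < n \<and> diameter (omega f 0 n ` U) > d}"
      using h unfolding synd_sensitive_def by blast
    show ?thesis unfolding synd_sensitive_def
    proof (intro exI conjI allI impI, fact d(1))
      fix U assume U: "openin (top_of_set X) U \<and> U \<noteq> {}"
      obtain V where V: "openin (top_of_set X) V" "V \<noteq> {}"
        "\<And>n. k < n \<Longrightarrow> diameter (omega f 0 n ` V) \<le> diameter (omega f k n ` U)"
        using pull U by blast
      have "syndetic {n\<in>{n. 0 < n \<and> diameter (omega f 0 n ` V) > d}. k < n}"
        using synd_shift d(2) V(1,2) by blast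
      then show "syndetic {n. k < n \<and> diameter (omega f k n ` U) > d}"
      proof (rule synd_mono, safe)
        fix n assume "0 < n" "d < diameter (omega f 0 n ` V)" "k < n"
        then show "d < diameter (omega f k n ` U)" using V(3)[of n] by linarith
      qed
    qed
  qed
  have B: "cofin_sensitive X f k" if h: "cofin_sensitive X f 0"
  proof -
    obtain d where d: "d > 0" "\<And>U. openin (top_of_set X) U \<and> U \<noteq> {} \<Longrightarrow>
      (\<exists>K. \<forall>n. K \<le> n \<and> 0 < n \<longrightarrow> diameter (omega f 0 n ` U) > d)"
      using h unfolding cofin_sensitive_def by blast
    show ?thesis unfolding cofin_sensitive_def
    proof (rule exI[of _ d], intro conjI allI impI, fact d(1))
      fix U assume U: "openin (top_of_set X) U \<and> U \<noteq> {}"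
      obtain V where V: "openin (top_of_set X) V" "V \<noteq> {}"
        "\<And>n. k < n \<Longrightarrow> diameter (omega f 0 n ` V) \<le> diameter (omega f k n ` U)"
        using pull U by blast
      obtain K where K: "\<forall>n. K \<le> n \<and> 0 < n \<longrightarrow> diameter (omega f 0 n ` V) > d"
        using d(2) V(1,2) by blast
      show "\<exists>K. \<forall>n. K \<le> n \<and> k < n \<longrightarrow> d < diameter (omega f k n ` U)"
      proof (intro exI allI impI)
        fix n assume "K \<le> n \<and> k < n"
        then have "K \<le> n" "k < n" "0 < n" by auto
        then show "d < diameter (omega f k n ` U)" using K V(3)[of n] by force
      qed
    qed
  qed
  have C: "synd_sensitive X f 0" if fo: "feeble_open X f" and h: "synd_sensitive X f k"
  proof -
    obtain d where d: "d > 0" "\<And>U. openin (top_of_set X) U \<and> U \<noteq> {} \<Longrightarrow>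
      syndetic {n. k < n \<and> diameter (omega f k n ` U) > d}"
      using h unfolding synd_sensitive_def by blast
    show ?thesis unfolding synd_sensitive_def
    proof (intro exI conjI allI impI, fact d(1))
      fix U assume U: "openin (top_of_set X) U \<and> U \<noteq> {}"
      obtain W where W: "openin (top_of_set X) W" "W \<noteq> {}"
        "\<And>n. k < n \<Longrightarrow> diameter (omega f k n ` W) \<le> diameter (omega f 0 n ` U)"
        using push fo U by blast
      have "syndetic {n. k < n \<and> diameter (omega f k n ` W) > d}"
        using d(2) W(1,2) by blast
      then show "syndetic {n. 0 < n \<and> diameter (omega f 0 n ` U) > d}"
      proof (rule synd_mono, safe)
        fix n assume "k < n" "d < diameter (omega f k n ` W)"
        then show "d < diameter (omega f 0 n ` U)" using W(3)[of n] by linarith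
        show "0 < n" using \<open>k < n\<close> by simp
      qed
    qed
  qed
  have D: "cofin_sensitive X f 0" if fo: "feeble_open X f" and h: "cofin_sensitive X f k"
  proof -
    obtain d where d: "d > 0" "\<And>U. openin (top_of_set X) U \<and> U \<noteq> {} \<Longrightarrow>
      (\<exists>K. \<forall>n. K \<le> n \<and> k < n \<longrightarrow> diameter (omega f k n ` U) > d)"
      using h unfolding cofin_sensitive_def by blast
    show ?thesis unfolding cofin_sensitive_def
    proof (rule exI[of _ d], intro conjI allI impI, fact d(1))
      fix U assume U: "openin (top_of_set X) U \<and> U \<noteq> {}"
      obtain W where W: "openin (top_of_set X) W" "W \<noteq> {}"
        "\<And>n. k < n \<Longrightarrow> diameter (omega f k n ` W) \<le> diameter (omega f 0 n ` U)"
        using push fo U by blast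
      obtain K where K: "\<forall>n. K \<le> n \<and> k < n \<longrightarrow> diameter (omega f k n ` W) > d"
        using d(2) W(1,2) by blast
      have "\<forall>n. max K (Suc k) \<le> n \<and> 0 < n \<longrightarrow> d < diameter (omega f 0 n ` U)"
      proof (intro allI impI)
        fix n assume "max K (Suc k) \<le> n \<and> 0 < n"
        then have "K \<le> n" "k < n" by auto
        then show "d < diameter (omega f 0 n ` U)" using K W(3)[of n] by force
      qed
      then show "\<exists>K. \<forall>n. K \<le> n \<and> 0 < n \<longrightarrow> d < diameter (omega f 0 n ` U)" by blast
    qed
  qed
  show ?thesis using A B C D by blast
qed

end
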